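(* The linear maps $\mathrm{d}^i_{0,0}:\mathcal{W}\to\mathcal{F}_0\otimes\mathcal{F}_0$ ($i=1,\dots,5$) given for $m,n\in\mathbb{Z}$ by $\mathrm{d}^1_{0,0}(L_m)=v_0\otimes v_m$, $\mathrm{d}^2_{0,0}(L_m)=m\,v_0\otimes v_m$, $\mathrm{d}^3_{0,0}(L_m)=v_m\otimes v_0$, $\mathrm{d}^4_{0,0}(L_m)=m\,v_m\otimes v_0$, and $\mathrm{d}^5_{0,0}(L_0)=v_0\otimes v_0$, $\mathrm{d}^5_{0,0}(L_1)=0$, $\mathrm{d}^5_{0,0}(L_n)=-\sum_{i=1}^{n-1}v_i\otimes v_{n-i}$ for $n\geq2$, $\mathrm{d}^5_{0,0}(L_n)=\sum_{i=n}^{0}v_i\otimes v_{n-i}$ for $n\leq-1$, are 1-cocycles that are not 1-coboundaries, and $\mathrm{d}^1_{0,0},\dots,\mathrm{d}^5_{0,0}$ are linearly independent.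
   Context: The Witt algebra $\mathcal{W}$ has basis $\{L_n\mid n\in\mathbb{Z}\}$ and bracket $[L_m,L_n]=(m-n)L_{m+n}$. $\mathcal{F}_0$ has basis $\{v_n\}$ with $L_m\cdot v_n=-n v_{m+n}$, and $\mathcal{F}_0\otimes\mathcal{F}_0$ is a $\mathcal{W}$-module via $L_m\cdot(v_i\otimes v_j)=-i\,v_{m+i}\otimes v_j-j\,v_i\otimes v_{m+j}$. A 1-cocycle is a linear map $d$ with $d([x,y])=x\cdot d(y)-y\cdot d(x)$; a 1-coboundary is a map $x\mapsto x\cdot v$ for a fixed $v$ in the module. *)

theory Defs
  imports Complex_Main
begin

text \<open>Elements of the Witt algebra W (over the complex numbers): finitely supported
  coefficient functions x, representing the sum over m of x m * L_m.\<close>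
definition witt :: "(int \<Rightarrow> complex) set" where
  "witt = {x. finite {m. x m \<noteq> 0}}"

text \<open>Lie bracket [L_m, L_n] = (m - n) L_(m+n), extended bilinearly.\<close>
definition wbracket :: "(int \<Rightarrow> complex) \<Rightarrow> (int \<Rightarrow> complex) \<Rightarrow> (int \<Rightarrow> complex)" where
  "wbracket x y = (\<lambda>k. \<Sum>m\<in>{m. x m \<noteq> 0}. of_int (m - (k - m)) * x m * y (k - m))"

text \<open>Elements of F_0 tensor F_0: finitely supported coefficient functions f,
  representing the sum over (i,j) of f (i,j) * v_i \<otimes> v_j.\<close>
type_synonym tens = "int \<times> int \<Rightarrow> complex"

definition tens_mod :: "tens set" where
  "tens_mod = {f. finite {p. f p \<noteq> 0}}"

definition vt :: "int \<Rightarrow> int \<Rightarrow> tens" where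
  "vt i j = (\<lambda>p. if p = (i, j) then 1 else 0)"

text \<open>Action of the basis element L_m:
  L_m (v_i \<otimes> v_j) = -i v_(m+i) \<otimes> v_j - j v_i \<otimes> v_(m+j), extended linearly.\<close>
definition act :: "int \<Rightarrow> tens \<Rightarrow> tens" where
  "act m f = (\<lambda>(a, b). - of_int (a - m) * f (a - m, b) - of_int (b - m) * f (a, b - m))"

definition wact :: "(int \<Rightarrow> complex) \<Rightarrow> tens \<Rightarrow> tens" where
  "wact x f = (\<lambda>p. \<Sum>m\<in>{m. x m \<noteq> 0}. x m * act m f p)"

definition lin_ext :: "(int \<Rightarrow> tens) \<Rightarrow> (int \<Rightarrow> complex) \<Rightarrow> tens" where
  "lin_ext D x = (\<lambda>p. \<Sum>m\<in>{m. x m \<noteq> 0}. x m * D m p)"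

definition is_cocycle :: "((int \<Rightarrow> complex) \<Rightarrow> tens) \<Rightarrow> bool" where
  "is_cocycle d \<longleftrightarrow> (\<forall>x\<in>witt. \<forall>y\<in>witt.
      d (wbracket x y) = (\<lambda>p. wact x (d y) p - wact y (d x) p))"

definition is_coboundary :: "((int \<Rightarrow> complex) \<Rightarrow> tens) \<Rightarrow> bool" where
  "is_coboundary d \<longleftrightarrow> (\<exists>v\<in>tens_mod. \<forall>x\<in>witt. d x = wact x v)"

definition dval :: "nat \<Rightarrow> int \<Rightarrow> tens" where
  "dval i m =
    (if i = 1 then vt 0 m
     else if i = 2 then (\<lambda>p. of_int m * vt 0 m p)
     else if i = 3 then vt m 0
     else if i = 4 then (\<lambda>p. of_int m * vt m 0 p)
     else if m = 0 then vt 0 0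
     else if m = 1 then (\<lambda>p. 0)
     else if m \<ge> 2 then (\<lambda>p. - (\<Sum>k\<in>{1..m-1}. vt k (m - k) p))
     else (\<lambda>p. \<Sum>k\<in>{m..0}. vt k (m - k) p))"

definition d00 :: "nat \<Rightarrow> (int \<Rightarrow> complex) \<Rightarrow> tens" where
  "d00 i = lin_ext (dval i)"

end

theory Submission
  imports Defs
begin


lemma finite_bound: "finite (S::int set) \<Longrightarrow> \<exists>N\<ge>0. S \<subseteq> {-N..N}"
proof -
  assume f: "finite S"
  let ?N = "Max (insert 0 (abs ` S))"
  have "\<forall>s\<in>S. \<bar>s\<bar> \<le> ?N" using f by (auto intro: Max_ge)
  moreover have "0 \<le> ?N" using f by (auto intro: Max_ge)
  ultimately show ?thesis by (intro exI[of _ ?N]) force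
qed

lemma sum_supp:
  assumes "finite A" "{m. x m \<noteq> 0} \<subseteq> A" "\<And>m. x m = 0 \<Longrightarrow> g m = 0"
  shows "sum g {m. x m \<noteq> 0} = sum g A"
  by (rule sum.mono_neutral_left) (use assms in auto)

lemma act_module: "act m (act n f) q - act n (act m f) q = of_int (m - n) * act (m + n) f q"
proof (cases q)
  case (Pair a b)
  have e1: "a - n - m = a - m - n" "b - n - m = b - m - n" by simp_all
  show ?thesis unfolding Pair act_def by (simp add: e1 algebra_simps)
qed

lemma act_add: "act m (\<lambda>q. g q + h q) q = act m g q + act m h q"
  by (cases q) (simp add: act_def algebra_simps)

lemma act_sum: "act m (\<lambda>q. \<Sum>n\<in>I. y n * D n q) q = (\<Sum>n\<in>I. y n * act m (D n) q)"
  by (cases q) (simp add: act_def sum_distrib_left sum_subtractf sum.distrib algebra_simps)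

lemma cocycle_from_basis:
  assumes B: "\<And>m n p. of_int (m - n) * D (m + n) p = act m (D n) p - act n (D m) p"
  shows "is_cocycle (lin_ext D)"
  unfolding is_cocycle_def
proof (intro ballI ext)
  fix x y p assume x: "x \<in> witt" and y: "y \<in> witt"
  obtain N1 where "{m. x m \<noteq> 0} \<subseteq> {-N1..N1}" "N1 \<ge> 0" using finite_bound x unfolding witt_def by blast
  moreover obtain N2 where "{m. y m \<noteq> 0} \<subseteq> {-N2..N2}" "N2 \<ge> 0" using finite_bound y unfolding witt_def by blast
  moreover have "{-N1..N1} \<subseteq> {-max N1 N2..max N1 N2}" "{-N2..N2} \<subseteq> {-max N1 N2..max N1 N2}" by auto
  ultimately obtain N where sx: "{m. x m \<noteq> 0} \<subseteq> {-N..N}" and sy: "{m. y m \<noteq> 0} \<subseteq> {-N..N}" and N0: "N \<ge> 0"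
    by (intro that[of "max N1 N2"]) (blast, blast, simp)
  define I where "I = {-N..N}"
  define J where "J = {-2*N..2*N}"
  have fI: "finite I" and fJ: "finite J" unfolding I_def J_def by auto
  have sx': "{m. x m \<noteq> 0} \<subseteq> I" and sy': "{m. y m \<noteq> 0} \<subseteq> I" using sx sy I_def by auto
  define wb where "wb = wbracket x y"
  have wb: "wb k = (\<Sum>m\<in>I. of_int (m - (k - m)) * x m * y (k - m))" for k
    unfolding wb_def wbracket_def by (rule sum_supp[OF fI sx']) simp
  have wb0: "wb k = 0" if "k \<notin> J" for k
  proof -
    have "of_int (m - (k - m)) * x m * y (k - m) = 0" if "m \<in> I" for m
    proof -
      have "k - m \<notin> I" using \<open>m \<in> I\<close> \<open>k \<notin> J\<close> unfolding I_def J_def by auto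
      then have "y (k - m) = 0" using sy' by auto
      then show ?thesis by simp
    qed
    then show ?thesis unfolding wb by (intro sum.neutral) blast
  qed
  have swb: "{k. wb k \<noteq> 0} \<subseteq> J" using wb0 by auto
  have LHS: "lin_ext D wb p = (\<Sum>k\<in>J. wb k * D k p)"
    unfolding lin_ext_def by (rule sum_supp[OF fJ swb]) simp
  also have "\<dots> = (\<Sum>k\<in>J. \<Sum>m\<in>I. of_int (m - (k - m)) * x m * y (k - m) * D k p)"
    unfolding wb by (simp add: sum_distrib_right)
  also have "\<dots> = (\<Sum>m\<in>I. \<Sum>k\<in>J. of_int (m - (k - m)) * x m * y (k - m) * D k p)"
    by (rule sum.swap)
  also have "\<dots> = (\<Sum>m\<in>I. \<Sum>n\<in>I. x m * y n * (of_int (m - n) * D (m + n) p))"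
  proof (rule sum.cong[OF refl])
    fix m assume mI: "m \<in> I"
    define h where "h n = x m * y n * (of_int (m - n) * D (m + n) p)" for n
    have "(\<Sum>k\<in>J. of_int (m - (k - m)) * x m * y (k - m) * D k p) = (\<Sum>k\<in>J. h (k - m))"
      unfolding h_def by (intro sum.cong) (auto simp: algebra_simps)
    also have "\<dots> = sum h ((\<lambda>k. k - m) ` J)"
      by (subst sum.reindex) (auto simp: inj_on_def)
    also have "\<dots> = sum h I"
    proof (rule sum.mono_neutral_right)
      show "finite ((\<lambda>k. k - m) ` J)" using fJ by simp
      show "I \<subseteq> (\<lambda>k. k - m) ` J"
      proof
        fix n assume "n \<in> I"
        then have "n + m \<in> J" using mI unfolding I_def J_def by auto
        then show "n \<in> (\<lambda>k. k - m) ` J" by (intro image_eqI[of _ _ "n + m"]) auto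
      qed
      show "\<forall>i\<in>(\<lambda>k. k - m) ` J - I. h i = 0" using sy' unfolding h_def by auto
    qed
    finally show "(\<Sum>k\<in>J. of_int (m - (k - m)) * x m * y (k - m) * D k p) = (\<Sum>n\<in>I. x m * y n * (of_int (m - n) * D (m + n) p))"
      unfolding h_def .
  qed
  also have "\<dots> = (\<Sum>m\<in>I. \<Sum>n\<in>I. x m * y n * act m (D n) p) - (\<Sum>m\<in>I. \<Sum>n\<in>I. x m * y n * act n (D m) p)"
    unfolding B by (simp add: algebra_simps sum_subtractf)
  also have "\<dots> = wact x (lin_ext D y) p - wact y (lin_ext D x) p"
  proof -
    have ly: "lin_ext D y = (\<lambda>q. \<Sum>n\<in>I. y n * D n q)"
      unfolding lin_ext_def by (intro ext sum_supp[OF fI sy']) simp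
    have lx: "lin_ext D x = (\<lambda>q. \<Sum>n\<in>I. x n * D n q)"
      unfolding lin_ext_def by (intro ext sum_supp[OF fI sx']) simp
    have w1: "wact x (lin_ext D y) p = (\<Sum>m\<in>I. \<Sum>n\<in>I. x m * y n * act m (D n) p)"
      unfolding wact_def ly act_sum
      by (subst sum_supp[OF fI sx']) (auto simp: sum_distrib_left algebra_simps)
    have w2: "wact y (lin_ext D x) p = (\<Sum>n\<in>I. \<Sum>m\<in>I. y n * x m * act n (D m) p)"
      unfolding wact_def lx act_sum
      by (subst sum_supp[OF fI sy']) (auto simp: sum_distrib_left algebra_simps)
    show ?thesis unfolding w1 w2 by (subst (2) sum.swap) (simp add: algebra_simps)
  qed
  finally show "lin_ext D (wbracket x y) p = wact x (lin_ext D y) p - wact y (lin_ext D x) p"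
    unfolding wb_def .
qed



lemma act_vt: "act m (vt i j) (a, b) =
  (if a = m + i \<and> b = j then - of_int i else 0) + (if a = i \<and> b = m + j then - of_int j else 0)"
proof -
  have 1: "- of_int (a - m) * vt i j (a - m, b) = (if a = m + i \<and> b = j then - of_int i else 0)"
    by (auto simp: vt_def)
  have 2: "of_int (b - m) * vt i j (a, b - m) = (if a = i \<and> b = m + j then of_int j else 0)"
    by (auto simp: vt_def)
  show ?thesis unfolding act_def by (simp only: split 1 2) simp
qed

lemma act_smult: "act m (\<lambda>p. c * f p) q = c * act m f q"
  by (cases q) (simp add: act_def algebra_simps)


lemma basis1: "of_int (m - n) * vt 0 (m + n) (a,b) = act m (vt 0 n) (a,b) - act n (vt 0 m) (a,b)"
  unfolding act_vt
  apply (simp only: vt_def of_int_0 minus_zero add_0_right add_0 if_cancel prod.inject add.commute[of n m] mult_zero_right mult_zero_left)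
  apply (cases "a = 0 \<and> b = m + n")
   apply (simp only: if_P if_not_P)
   apply (simp add: algebra_simps)
  apply (simp only: if_P if_not_P)
  apply simp
  done

lemma basis2: "of_int (m - n) * (of_int (m + n) * vt 0 (m + n) (a,b)) =
   act m (\<lambda>p. of_int n * vt 0 n p) (a,b) - act n (\<lambda>p. of_int m * vt 0 m p) (a,b)"
  unfolding act_smult act_vt
  apply (simp only: vt_def of_int_0 minus_zero add_0_right add_0 if_cancel prod.inject add.commute[of n m] mult_zero_right mult_zero_left)
  apply (cases "a = 0 \<and> b = m + n")
   apply (simp only: if_P if_not_P)
   apply (simp add: algebra_simps)
  apply (simp only: if_P if_not_P)
  apply simp
  done

lemma basis3: "of_int (m - n) * vt (m + n) 0 (a,b) = act m (vt n 0) (a,b) - act n (vt m 0) (a,b)"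
  unfolding act_vt
  apply (simp only: vt_def of_int_0 minus_zero add_0_right add_0 if_cancel prod.inject add.commute[of n m] mult_zero_right mult_zero_left)
  apply (cases "a = m + n \<and> b = 0")
   apply (simp only: if_P if_not_P)
   apply (simp add: algebra_simps)
  apply (simp only: if_P if_not_P)
  apply simp
  done

lemma basis4: "of_int (m - n) * (of_int (m + n) * vt (m + n) 0 (a,b)) =
   act m (\<lambda>p. of_int n * vt n 0 p) (a,b) - act n (\<lambda>p. of_int m * vt m 0 p) (a,b)"
  unfolding act_smult act_vt
  apply (simp only: vt_def of_int_0 minus_zero add_0_right add_0 if_cancel prod.inject add.commute[of n m] mult_zero_right mult_zero_left)
  apply (cases "a = m + n \<and> b = 0")
   apply (simp only: if_P if_not_P)
   apply (simp add: algebra_simps)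
  apply (simp only: if_P if_not_P)
  apply simp
  done


definition u0 :: tens where
  "u0 = (\<lambda>(a, b). if a + b = 0 \<and> a < 0 then 1 / of_int a else 0)"

lemma act_u0: "act n u0 (a, b) =
  (if a + b = n then (if a < 0 then 1 else 0) - (if a < n then 1 else 0) else 0)"
proof -
  have t1: "- of_int (a - n) * u0 (a - n, b) = (if a + b = n \<and> a < n then -1 else 0)"
  proof (cases "a + b = n \<and> a < n")
    case True
    then have "a - n \<noteq> 0" by simp
    then have nz: "of_int (a - n) \<noteq> (0::complex)" by simp
    have "u0 (a - n, b) = 1 / of_int (a - n)" using True by (simp add: u0_def)
    then have "- of_int (a - n) * u0 (a - n, b) = - (of_int (a - n) * (1 / of_int (a - n)))" by (simp only: mult_minus_left)
    also have "\<dots> = -1" using nz by (simp del: of_int_diff)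
    finally show ?thesis using True by simp
  qed (auto simp: u0_def)
  have t2: "of_int (b - n) * u0 (a, b - n) = (if a + b = n \<and> a < 0 then -1 else 0)"
  proof (cases "a + b = n \<and> a < 0")
    case True
    then have bn: "b - n = - a" and a0: "a \<noteq> 0" by auto
    have "u0 (a, b - n) = 1 / of_int a" using True bn by (simp add: u0_def)
    then have "of_int (b - n) * u0 (a, b - n) = - (of_int a * (1 / of_int a))" using bn by simp
    also have "\<dots> = -1" using a0 by simp
    finally show ?thesis using True by simp
  qed (auto simp: u0_def)
  show ?thesis unfolding act_def by (simp only: split t1 t2) simp
qed

lemma vt_sum: "finite A \<Longrightarrow> (\<Sum>k\<in>A. vt k (n - k) (a, b)) = (if a + b = n \<and> a \<in> A then 1 else 0)"
proof -
  assume "finite A"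
  have "(\<Sum>k\<in>A. vt k (n - k) (a, b)) = (\<Sum>k\<in>A. if a = k then (if a + b = n then 1 else 0) else 0)"
    by (intro sum.cong) (auto simp: vt_def)
  also have "\<dots> = (if a + b = n \<and> a \<in> A then 1 else 0)"
    using \<open>finite A\<close> by (simp add: sum.delta)
  finally show ?thesis .
qed

lemma dval5: "dval 5 n (a, b) = act n u0 (a, b) + vt 0 n (a, b)"
proof -
  have v: "vt 0 n (a, b) = (if a = 0 \<and> b = n then 1 else 0)" by (simp add: vt_def)
  consider "n = 0" | "n = 1" | "n \<ge> 2" | "n \<le> -1" by linarith
  then show ?thesis
  proof cases
    case 1 then show ?thesis unfolding act_u0 v by (simp add: dval_def vt_def)
  next
    case 2 then show ?thesis unfolding act_u0 v by (simp add: dval_def)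
  next
    case 3
    then have d: "dval 5 n (a, b) = - (if a + b = n \<and> a \<in> {1..n-1} then 1 else 0)"
      by (simp add: dval_def vt_sum)
    show ?thesis unfolding act_u0 v d using 3 by auto
  next
    case 4
    then have d: "dval 5 n (a, b) = (if a + b = n \<and> a \<in> {n..0} then 1 else 0)"
      by (simp add: dval_def vt_sum)
    show ?thesis unfolding act_u0 v d using 4 by auto
  qed
qed

lemma basis5: "of_int (m - n) * dval 5 (m + n) p = act m (dval 5 n) p - act n (dval 5 m) p"
proof -
  have e: "dval 5 k = (\<lambda>q. act k u0 q + vt 0 k q)" for k
    by (intro ext) (metis dval5 surj_pair)
  obtain a b where p: "p = (a, b)" by (cases p)
  show ?thesis unfolding e act_add p
    using act_module[of m n u0 "(a,b)"] basis1[of m n a b] by (simp add: algebra_simps)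
qed



definition dl :: "int \<Rightarrow> int \<Rightarrow> complex" where "dl m = (\<lambda>k. if k = m then 1 else 0)"

lemma dl_witt: "dl m \<in> witt" by (simp add: witt_def dl_def)
lemma dl_supp: "{k. dl m k \<noteq> 0} = {m}" by (auto simp: dl_def)
lemma lin_ext_dl: "lin_ext D (dl m) = D m"
  by (simp add: lin_ext_def dl_supp) (simp add: dl_def)
lemma wact_dl: "wact (dl m) v = act m v"
  by (simp add: wact_def dl_supp) (simp add: dl_def)

lemma dval1: "dval 1 k = vt 0 k" by (simp add: dval_def)
lemma dval1': "dval (Suc 0) k = vt 0 k" by (simp add: dval_def)
lemma dval2: "dval 2 k = (\<lambda>p. of_int k * vt 0 k p)" by (simp add: dval_def)
lemma dval3: "dval 3 k = vt k 0" by (simp add: dval_def)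
lemma dval4: "dval 4 k = (\<lambda>p. of_int k * vt k 0 p)" by (simp add: dval_def)

lemma cocycles: "i \<in> {1..5} \<Longrightarrow> is_cocycle (d00 i)"
  unfolding d00_def
proof (rule cocycle_from_basis)
  fix m n :: int and p :: "int \<times> int" assume i: "i \<in> {1..5::nat}"
  obtain a b where p: "p = (a, b)" by (cases p)
  from i have "i = 1 \<or> i = 2 \<or> i = 3 \<or> i = 4 \<or> i = 5" by auto
  then show "of_int (m - n) * dval i (m + n) p = act m (dval i n) p - act n (dval i m) p"
    unfolding p
    by (elim disjE) (simp_all only: dval1 dval2 dval3 dval4 basis1 basis2 basis3 basis4 basis5)
qed

lemma act0: "act 0 v (0, 0) = 0" by (simp add: act_def)

lemma noncob: "i \<in> {1..5} \<Longrightarrow> \<not> is_coboundary (d00 i)"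
proof
  assume i: "i \<in> {1..5::nat}" and "is_coboundary (d00 i)"
  then obtain v where v: "v \<in> tens_mod" and H: "\<And>x. x \<in> witt \<Longrightarrow> d00 i x = wact x v"
    unfolding is_coboundary_def by blast
  have Hm: "dval i m = act m v" for m
    using H[OF dl_witt[of m]] unfolding d00_def lin_ext_dl wact_dl .
  have fv: "finite {p. v p \<noteq> 0}" using v by (simp add: tens_mod_def)
  have f1: "finite {m. v (-m, m) \<noteq> 0}"
    using finite_vimageI[OF fv, of "\<lambda>m. (-m, m)"] by (simp add: inj_on_def vimage_def)
  have f2: "finite {m. v (m, -m) \<noteq> 0}"
    using finite_vimageI[OF fv, of "\<lambda>m. (m, -m)"] by (simp add: inj_on_def vimage_def)
  from i have "i = 1 \<or> i = 3 \<or> i = 5 \<or> i = 2 \<or> i = 4" by auto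
  then show False
  proof (elim disjE)
    assume "i = 1" then have "dval 1 0 (0,0) = act 0 v (0,0)" using Hm by simp
    then show False by (simp add: dval_def vt_def act0)
  next
    assume "i = 3" then have "dval 3 0 (0,0) = act 0 v (0,0)" using Hm by simp
    then show False by (simp add: dval3 vt_def act0)
  next
    assume "i = 5" then have "dval 5 0 (0,0) = act 0 v (0,0)" using Hm by simp
    moreover have "dval 5 0 = vt 0 0" by (simp add: dval_def)
    ultimately show False by (simp add: vt_def act0)
  next
    assume i2: "i = 2"
    obtain m where m: "m \<notin> insert 0 {m. v (-m, m) \<noteq> 0}"
      using ex_new_if_finite[OF infinite_UNIV_int] f1 by blast
    have "dval i m (0, m) = act m v (0, m)" using Hm by simp
    moreover have "act m v (0, m) = of_int m * v (-m, m)" by (simp add: act_def)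
    moreover have "dval i m (0, m) = of_int m" unfolding i2 dval2 by (simp add: vt_def)
    ultimately show False using m by simp
  next
    assume i4: "i = 4"
    obtain m where m: "m \<notin> insert 0 {m. v (m, -m) \<noteq> 0}"
      using ex_new_if_finite[OF infinite_UNIV_int] f2 by blast
    have "dval i m (m, 0) = act m v (m, 0)" using Hm by simp
    moreover have "act m v (m, 0) = of_int m * v (m, -m)" by (simp add: act_def)
    moreover have "dval i m (m, 0) = of_int m" unfolding i4 dval4 by (simp add: vt_def)
    ultimately show False using m by simp
  qed
qed


lemma indep:
  assumes H: "\<forall>x\<in>witt. \<forall>p. (\<Sum>i=1..5. c i * d00 i x p) = 0"
  shows "\<forall>i\<in>{1..5::nat}. c i = 0"
proof -
  have s5: "{1..5::nat} = {1,2,3,4,5}" by auto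
  have E: "c 1 * dval 1 m p + c 2 * dval 2 m p + c 3 * dval 3 m p + c 4 * dval 4 m p + c 5 * dval 5 m p = 0" for m p
  proof -
    have "(\<Sum>i=1..5. c i * d00 i (dl m) p) = 0" using H dl_witt[of m] by blast
    then show ?thesis unfolding d00_def lin_ext_dl s5 by (simp add: algebra_simps)
  qed
  have v5_0: "dval 5 0 = vt 0 0" by (simp add: dval_def)
  have v5_1: "dval 5 1 = (\<lambda>p. 0)" by (simp add: dval_def)
  have v5_2: "dval 5 2 (a, b) = - (if a + b = 2 \<and> a \<in> {1..1} then 1 else 0)" for a b
    by (simp add: dval_def vt_sum del: atLeastAtMost_singleton)
  have v5_m: "dval 5 (-1) (a, b) = (if a + b = -1 \<and> a \<in> {-1..0} then 1 else 0)" for a b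
    by (simp add: dval_def vt_sum del: atLeastAtMost_singleton)
  have e0: "c 1 + c 3 + c 5 = 0" using E[of 0 "(0,0)"] unfolding v5_0
    by (simp add: dval1 dval1' dval2 dval3 dval4 vt_def mult.commute)
  have e1: "c 1 + c 2 = 0" using E[of 1 "(0,1)"] unfolding v5_1
    by (simp add: dval1 dval1' dval2 dval3 dval4 vt_def mult.commute)
  have e2: "c 3 + c 4 = 0" using E[of 1 "(1,0)"] unfolding v5_1
    by (simp add: dval1 dval1' dval2 dval3 dval4 vt_def mult.commute)
  have e3: "c 1 + 2 * c 2 = 0" using E[of 2 "(0,2)"] unfolding v5_2
    by (simp add: dval1 dval1' dval2 dval3 dval4 vt_def mult.commute)
  have e4: "c 3 + 2 * c 4 = 0" using E[of 2 "(2,0)"] unfolding v5_2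
    by (simp add: dval1 dval1' dval2 dval3 dval4 vt_def mult.commute)
  have c2: "c 2 = 0" using e1 e3 by (metis add_left_cancel add.right_neutral mult_2 add.assoc)
  have c1: "c 1 = 0" using e1 c2 by simp
  have c4: "c 4 = 0" using e2 e4 by (metis add_left_cancel add.right_neutral mult_2 add.assoc)
  have c3: "c 3 = 0" using e2 c4 by simp
  have c5: "c 5 = 0" using e0 c1 c3 by simp
  show ?thesis unfolding s5 using c1 c2 c3 c4 c5 by simp
qed

theorem propositionP3p0:
  shows "(\<forall>i\<in>{1..5::nat}. is_cocycle (d00 i) \<and> \<not> is_coboundary (d00 i))
    \<and> (\<forall>c :: nat \<Rightarrow> complex.
          (\<forall>x\<in>witt. \<forall>p. (\<Sum>i=1..5. c i * d00 i x p) = 0)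
          \<longrightarrow> (\<forall>i\<in>{1..5::nat}. c i = 0))"
  using cocycles noncob indep by blast

end
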